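(* The set $Sort_2$ of $2$-sortable permutations is a permutation class whose basis (the set of minimal permutations, under pattern containment, not in $Sort_2$) is infinite; in particular the basis contains every permutation $\alpha^{(j)}$, $j\ge0$, where $\alpha^{(j)}=2j+4,\ 3,\ \omega^{(j)},\ 1,\ 5,\ 2$ and $\omega^{(j)}=2j+2,2j+5,2j,2j+3,\dots,6,9,4,7$ is the concatenation over $i=j,j-1,\dots,1$ of the pairs $2i+2,2i+5$.
   Context: The $\mathfrak{D}^k\mathfrak{I}$ machine consists of $k$ stacks $D_1,\dots,D_k$ (decreasing stacks) followed in series by a stack $I$ (increasing stack). The input permutation is read from left to right. The elements of each $D_i$ must be in decreasing order from top to bottom (top is largest), and those of $I$ in increasing order from top to bottom (top is smallest). Operations: $d_0$ pushes the next input element into $D_1$; $d_i$ ($1\le i\le k-1$) moves the top of $D_i$ to $D_{i+1}$; $d_k$ moves the top of $D_k$ to $I$; $d_{k+1}$ pops the top of $I$ and appends it to the output. An operation is legal if it respects the stack restrictions. A permutation $\pi$ is $k$-sortable if some sequence of legal operations outputs the elements of $\pi$ in increasing order; $Sort_k$ is the set of $k$-sortable permutations. A class is a downset of the pattern containment poset. *)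

theory Defs
  imports Main
begin

definition is_perm :: "nat list \<Rightarrow> bool" where
  "is_perm p \<longleftrightarrow> distinct p \<and> set p = {1..length p}"

definition order_iso :: "nat list \<Rightarrow> nat list \<Rightarrow> bool" where
  "order_iso xs ys \<longleftrightarrow> length xs = length ys \<and>
     (\<forall>i<length xs. \<forall>j<length xs. xs!i < xs!j \<longleftrightarrow> ys!i < ys!j)"

definition contains :: "nat list \<Rightarrow> nat list \<Rightarrow> bool" where
  "contains p s \<longleftrightarrow> (\<exists>A. order_iso (nths p A) s)"

definition is_class :: "nat list set \<Rightarrow> bool" where
  "is_class C \<longleftrightarrow> (\<forall>p\<in>C. is_perm p) \<and>
     (\<forall>p\<in>C. \<forall>s. is_perm s \<and> contains p s \<longrightarrow> s \<in> C)"

definition basis :: "nat list set \<Rightarrow> nat list set" where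
  "basis C = {s. is_perm s \<and> s \<notin> C \<and>
     (\<forall>t. is_perm t \<and> contains s t \<and> t \<noteq> s \<longrightarrow> t \<in> C)}"

text \<open>Machine states: (input, decreasing stacks D_1..D_k, stack I, output).
  Stacks are lists with the head being the top.\<close>
type_synonym state = "nat list \<times> nat list list \<times> nat list \<times> nat list"

inductive step :: "nat \<Rightarrow> state \<Rightarrow> state \<Rightarrow> bool" for k :: nat where
  d0: "\<lbrakk>1 \<le> k; ds!0 = [] \<or> x > hd (ds!0)\<rbrakk> \<Longrightarrow>
        step k (x # inp, ds, I, out) (inp, ds[0 := x # ds!0], I, out)"
| di: "\<lbrakk>Suc i < k; ds!i = x # r; ds!(Suc i) = [] \<or> x > hd (ds!(Suc i))\<rbrakk> \<Longrightarrow>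
        step k (inp, ds, I, out) (inp, ds[i := r, Suc i := x # ds!(Suc i)], I, out)"
| dk: "\<lbrakk>1 \<le> k; ds!(k-1) = x # r; I = [] \<or> x < hd I\<rbrakk> \<Longrightarrow>
        step k (inp, ds, I, out) (inp, ds[k-1 := r], x # I, out)"
| dout: "step k (inp, ds, x # I, out) (inp, ds, I, out @ [x])"

definition sortable :: "nat \<Rightarrow> nat list \<Rightarrow> bool" where
  "sortable k p \<longleftrightarrow>
     (step k)\<^sup>*\<^sup>* (p, replicate k [], [], []) ([], replicate k [], [], sort p)"

definition Sort :: "nat \<Rightarrow> nat list set" where
  "Sort k = {p. is_perm p \<and> sortable k p}"

definition omega :: "nat \<Rightarrow> nat list" where
  "omega j = concat (map (\<lambda>i. [2*i+2, 2*i+5]) (rev [1..<j+1]))"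

definition alpha :: "nat \<Rightarrow> nat list" where
  "alpha j = [2*j+4, 3] @ omega j @ [1, 5, 2]"

lemma "alpha 0 = [4,3,1,5,2]" "alpha 2 = [8,3,6,9,4,7,1,5,2]"
  by (simp_all add: alpha_def omega_def upt_rec)

end

theory Submission
  imports Defs "HOL-Library.Multiset"
begin

type_synonym st2 = "nat list \<times> nat list \<times> nat list \<times> nat list \<times> nat list"

fun emb :: "st2 \<Rightarrow> state" where "emb (inp,a,b,I,out) = (inp,[a,b],I,out)"

inductive step2 :: "st2 \<Rightarrow> st2 \<Rightarrow> bool" where
  p0: "D1 = [] \<or> x > hd D1 \<Longrightarrow> step2 (x#inp, D1, D2, I, out) (inp, x#D1, D2, I, out)"
| p1: "D2 = [] \<or> x > hd D2 \<Longrightarrow> step2 (inp, x#D1, D2, I, out) (inp, D1, x#D2, I, out)"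
| p2: "I = [] \<or> x < hd I \<Longrightarrow> step2 (inp, D1, x#D2, I, out) (inp, D1, D2, x#I, out)"
| p3: "step2 (inp, D1, D2, x#I, out) (inp, D1, D2, I, out@[x])"

lemma emb_inj: "emb s = emb t \<Longrightarrow> s = t"
  by (cases s; cases t) auto

lemma step_emb0: "step 2 (inp,[a,b],I,out) t \<Longrightarrow>
  (\<exists>x inp'. inp = x#inp' \<and> (a=[] \<or> x > hd a) \<and> t = (inp',[x#a,b],I,out)) \<or>
  (\<exists>x r. a = x#r \<and> (b=[] \<or> x > hd b) \<and> t = (inp,[r,x#b],I,out)) \<or>
  (\<exists>x r. b = x#r \<and> (I=[] \<or> x < hd I) \<and> t = (inp,[a,r],x#I,out)) \<or>
  (\<exists>x I'. I = x#I' \<and> t = (inp,[a,b],I',out@[x]))"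
  by (erule step.cases) (auto simp: less_Suc_eq)

lemma ex_emb[simp]: "(\<exists>s'. (inp,[a,b],I,out) = emb s' \<and> P s') = P (inp,a,b,I,out)"
proof
  assume "\<exists>s'. (inp,[a,b],I,out) = emb s' \<and> P s'"
  then obtain s' where "(inp,[a,b],I,out) = emb s'" "P s'" by blast
  then show "P (inp,a,b,I,out)" by (cases s') auto
qed (metis emb.simps)

lemma step_emb1: "step 2 (inp,[a,b],I,out) t \<Longrightarrow> \<exists>s'. t = emb s' \<and> step2 (inp,a,b,I,out) s'"
  by (drule step_emb0) (auto intro: step2.intros)

lemma step_emb: "step 2 (emb s) t \<Longrightarrow> \<exists>s'. t = emb s' \<and> step2 s s'"
  by (cases s) (auto dest: step_emb1)

lemma step2_step: "step2 s s' \<Longrightarrow> step 2 (emb s) (emb s')"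
proof (induction rule: step2.induct)
  case (p0 D1 x inp D2 I out)
  then show ?case using step.d0[of 2 "[D1,D2]" x inp I out] by simp
next
  case (p1 D2 x inp D1 I out)
  then show ?case using step.di[of 0 2 "[x#D1,D2]" x D1 inp I out] by simp
next
  case (p2 I x inp D1 D2 out)
  then show ?case using step.dk[of 2 "[D1,x#D2]" x D2 I inp out] by simp
next
  case (p3 inp D1 D2 x I out)
  then show ?case using step.dout[of 2 inp "[D1,D2]" x I out] by simp
qed

lemma steps_emb: "(step 2)\<^sup>*\<^sup>* u t \<Longrightarrow> u = emb s \<Longrightarrow> \<exists>s'. t = emb s' \<and> step2\<^sup>*\<^sup>* s s'"
proof (induction arbitrary: s rule: rtranclp_induct)
  case base then show ?case by (metis rtranclp.rtrancl_refl)
next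
  case (step y z)
  from step.IH[OF step.prems] obtain s1 where y: "y = emb s1" and r: "step2\<^sup>*\<^sup>* s s1" by blast
  from step.hyps(2) y step_emb obtain s2 where "z = emb s2" "step2 s1 s2" by blast
  then show ?case using r by (metis rtranclp.rtrancl_into_rtrancl)
qed

lemma steps2_steps: "step2\<^sup>*\<^sup>* s s' \<Longrightarrow> (step 2)\<^sup>*\<^sup>* (emb s) (emb s')"
  by (induction rule: rtranclp_induct) (auto intro: rtranclp.rtrancl_into_rtrancl step2_step)

lemma sortable2_iff: "sortable 2 p \<longleftrightarrow> step2\<^sup>*\<^sup>* (p,[],[],[],[]) ([],[],[],[],sort p)"
proof
  assume "sortable 2 p"
  then have "(step 2)\<^sup>*\<^sup>* (emb (p,[],[],[],[])) (emb ([],[],[],[],sort p))"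
    unfolding sortable_def by (simp add: numeral_2_eq_2)
  then obtain s' where "emb ([],[],[],[],sort p) = emb s'" "step2\<^sup>*\<^sup>* (p,[],[],[],[]) s'"
    using steps_emb by blast
  then show "step2\<^sup>*\<^sup>* (p,[],[],[],[]) ([],[],[],[],sort p)" using emb_inj by metis
next
  assume "step2\<^sup>*\<^sup>* (p,[],[],[],[]) ([],[],[],[],sort p)"
  then show "sortable 2 p" using steps2_steps unfolding sortable_def by (fastforce simp: numeral_2_eq_2)
qed


fun wf2 :: "st2 \<Rightarrow> bool" where
  "wf2 (inp,a,b,I,out) = (sorted_wrt (>) a \<and> sorted_wrt (>) b \<and> sorted_wrt (<) I)"

fun msum :: "st2 \<Rightarrow> nat multiset" where
  "msum (inp,a,b,I,out) = mset inp + mset a + mset b + mset I + mset out"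

fun vals :: "st2 \<Rightarrow> nat set" where
  "vals (inp,a,b,I,out) = set inp \<union> set a \<union> set b \<union> set I \<union> set out"

lemma hd_gt_all: "sorted_wrt (>) (D::nat list) \<Longrightarrow> (D = [] \<or> x > hd D) \<Longrightarrow> \<forall>y\<in>set D. y < x"
  by (cases D) (auto intro: less_trans)

lemma hd_lt_all: "sorted_wrt (<) (D::nat list) \<Longrightarrow> (D = [] \<or> x < hd D) \<Longrightarrow> \<forall>y\<in>set D. x < y"
  by (cases D) (auto intro: less_trans)

lemma wf2_step: "step2 s s' \<Longrightarrow> wf2 s \<Longrightarrow> wf2 s'"
proof (induction rule: step2.induct)
  case (p0 D1 x inp D2 I out) then show ?case using hd_gt_all[of D1 x] by auto
next
  case (p1 D2 x inp D1 I out) then show ?case using hd_gt_all[of D2 x] by auto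
next
  case (p2 I x inp D1 D2 out) then show ?case using hd_lt_all[of I x] by auto
next
  case (p3 inp D1 D2 x I out) then show ?case by auto
qed

lemma wf2_steps: "step2\<^sup>*\<^sup>* s s' \<Longrightarrow> wf2 s \<Longrightarrow> wf2 s'"
  by (induction rule: rtranclp_induct) (auto intro: wf2_step)

lemma msum_step: "step2 s s' \<Longrightarrow> msum s' = msum s"
  by (induction rule: step2.induct) (auto simp: add_ac)

lemma msum_steps: "step2\<^sup>*\<^sup>* s s' \<Longrightarrow> msum s' = msum s"
  by (induction rule: rtranclp_induct) (auto dest: msum_step)

lemma vals_msum: "vals s = set_mset (msum s)"
  by (cases s) auto

lemma flush: "step2\<^sup>*\<^sup>* (inp,a,b,I,out) (inp,a,b,[],out@I)"
proof (induction I arbitrary: out)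
  case Nil then show ?case by simp
next
  case (Cons x I)
  have 1: "step2 (inp,a,b,x#I,out) (inp,a,b,I,out@[x])" by (rule step2.p3)
  have "step2\<^sup>*\<^sup>* (inp,a,b,I,out@[x]) (inp,a,b,[],out@[x]@I)" using Cons[of "out@[x]"] by simp
  from converse_rtranclp_into_rtranclp[OF 1 this] show ?case by simp
qed

lemma run_sortable:
  assumes "step2\<^sup>*\<^sup>* (p,[],[],[],[]) ([],[],[],I,out)" and "sorted (out@I)"
  shows "sortable 2 p"
proof -
  have r: "step2\<^sup>*\<^sup>* (p,[],[],[],[]) ([],[],[],[],out@I)"
    using rtranclp_trans[OF assms(1) flush] by simp
  have m: "msum ([],[],[],[],out@I) = msum (p,[],[],[],[])" by (rule msum_steps[OF r])
  then have "mset (out@I) = mset p" by simp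
  then have e: "sort p = out@I" using assms(2) by (rule properties_for_sort)
  show ?thesis unfolding sortable2_iff e by (rule r)
qed

fun Fl :: "(nat \<Rightarrow> bool) \<Rightarrow> st2 \<Rightarrow> st2" where
  "Fl P (inp,a,b,I,out) = (filter P inp, filter P a, filter P b, filter P I, filter P out)"

lemma filt_gt: assumes "\<forall>y\<in>set (D::nat list). y < x" shows "filter P D = [] \<or> x > hd (filter P D)"
proof (cases "filter P D")
  case (Cons a l)
  have "a \<in> set D" using Cons filter_is_subset[of P D] by (metis list.set_intros(1) subsetD)
  then show ?thesis using Cons assms by auto
qed simp

lemma filt_lt: assumes "\<forall>y\<in>set (D::nat list). x < y" shows "filter P D = [] \<or> x < hd (filter P D)"
proof (cases "filter P D")
  case (Cons a l)
  have "a \<in> set D" using Cons filter_is_subset[of P D] by (metis list.set_intros(1) subsetD)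
  then show ?thesis using Cons assms by auto
qed simp

lemma step2_filter: "step2 s s' \<Longrightarrow> wf2 s \<Longrightarrow> step2 (Fl P s) (Fl P s') \<or> Fl P s' = Fl P s"
proof (induction rule: step2.induct)
  case (p0 D1 x inp D2 I out)
  then have "\<forall>y\<in>set D1. y < x" using hd_gt_all[of D1 x] by auto
  then show ?case using filt_gt[of D1 x P] by (auto intro: step2.intros)
next
  case (p1 D2 x inp D1 I out)
  then have "\<forall>y\<in>set D2. y < x" using hd_gt_all[of D2 x] by auto
  then show ?case using filt_gt[of D2 x P] by (auto intro: step2.intros)
next
  case (p2 I x inp D1 D2 out)
  then have "\<forall>y\<in>set I. x < y" using hd_lt_all[of I x] by auto
  then show ?case using filt_lt[of I x P] by (auto intro: step2.intros)
next
  case (p3 inp D1 D2 x I out) then show ?case by (auto intro: step2.intros)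
qed

lemma steps_filter: "step2\<^sup>*\<^sup>* s s' \<Longrightarrow> wf2 s \<Longrightarrow> step2\<^sup>*\<^sup>* (Fl P s) (Fl P s')"
proof (induction rule: rtranclp_induct)
  case base then show ?case by simp
next
  case (step y z)
  then have "wf2 y" using wf2_steps by blast
  with step show ?case using step2_filter[of y z P] by (auto intro: rtranclp.rtrancl_into_rtrancl)
qed

lemma sortable_filter: "sortable 2 p \<Longrightarrow> sortable 2 (filter P p)"
  unfolding sortable2_iff
  by (drule steps_filter[where P=P]) (auto simp: filter_sort)

fun Mp :: "(nat \<Rightarrow> nat) \<Rightarrow> st2 \<Rightarrow> st2" where
  "Mp f (inp,a,b,I,out) = (map f inp, map f a, map f b, map f I, map f out)"

lemma step2_map: "step2 s s' \<Longrightarrow> strict_mono_on V f \<Longrightarrow> vals s \<subseteq> V \<Longrightarrow> step2 (Mp f s) (Mp f s')"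
proof (induction rule: step2.induct)
  case (p0 D1 x inp D2 I out)
  then show ?case by (cases D1) (auto intro!: step2.intros dest: strict_mono_onD)
next
  case (p1 D2 x inp D1 I out)
  then show ?case by (cases D2) (auto intro!: step2.intros dest: strict_mono_onD)
next
  case (p2 I x inp D1 D2 out)
  then show ?case by (cases I) (auto intro!: step2.intros dest: strict_mono_onD)
next
  case (p3 inp D1 D2 x I out) then show ?case by (auto intro: step2.intros)
qed

lemma vals_steps: "step2\<^sup>*\<^sup>* s s' \<Longrightarrow> vals s' = vals s"
  using msum_steps vals_msum by metis

lemma steps_map: "step2\<^sup>*\<^sup>* s s' \<Longrightarrow> strict_mono_on (vals s) f \<Longrightarrow> step2\<^sup>*\<^sup>* (Mp f s) (Mp f s')"
proof (induction rule: rtranclp_induct)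
  case base then show ?case by simp
next
  case (step y z)
  then have "vals y = vals s" using vals_steps by blast
  with step show ?case using step2_map[of y z "vals s" f] by (auto intro: rtranclp.rtrancl_into_rtrancl)
qed

lemma sort_map_mono: "strict_mono_on (set p) f \<Longrightarrow> sort (map f p) = map f (sort p)"
proof (rule properties_for_sort)
  assume m: "strict_mono_on (set p) f"
  show "mset (map f (sort p)) = mset (map f p)" by simp
  have "sorted_wrt (\<lambda>x y. f x \<le> f y) (sort p)"
  proof (rule sorted_wrt_mono_rel[of _ "(\<le>)"])
    fix x y assume "x \<in> set (sort p)" "y \<in> set (sort p)" "x \<le> y"
    then show "f x \<le> f y" using m by (cases "x = y") (auto dest: strict_mono_onD)
  qed simp
  then show "sorted (map f (sort p))" by (simp add: sorted_map)
qed

lemma sortable_map: "sortable 2 p \<Longrightarrow> strict_mono_on (set p) f \<Longrightarrow> sortable 2 (map f p)"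
  unfolding sortable2_iff
  by (drule steps_map[where f=f]) (auto simp: sort_map_mono)

lemma order_iso_map:
  assumes "distinct p" "order_iso p q"
  shows "\<exists>f. strict_mono_on (set p) f \<and> q = map f p"
proof -
  define f where "f x = the (map_of (zip p q) x)" for x
  have len: "length p = length q" using assms(2) unfolding order_iso_def by simp
  have fi: "f (p!i) = q!i" if "i < length p" for i
    unfolding f_def using map_of_zip_nth[OF len assms(1)] that len by simp
  have "q = map f p" using len fi by (auto intro: nth_equalityI)
  moreover have "strict_mono_on (set p) f"
  proof (rule strict_mono_onI)
    fix r s assume "r \<in> set p" "s \<in> set p" "r < s"
    then obtain i j where "i < length p" "j < length p" "r = p!i" "s = p!j"
      by (auto simp: in_set_conv_nth)
    then show "f r < f s" using fi assms(2) \<open>r < s\<close> unfolding order_iso_def by auto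
  qed
  ultimately show ?thesis by blast
qed

lemma sortable_iso: "sortable 2 p \<Longrightarrow> distinct p \<Longrightarrow> order_iso p q \<Longrightarrow> sortable 2 q"
  using order_iso_map sortable_map by metis


lemma nths_filter: "distinct p \<Longrightarrow> nths p A = filter (\<lambda>x. x \<in> set (nths p A)) p"
proof (induction p arbitrary: A)
  case Nil then show ?case by simp
next
  case (Cons x xs)
  define B where "B = {j. Suc j \<in> A}"
  have IH: "nths xs B = filter (\<lambda>y. y \<in> set (nths xs B)) xs" using Cons by simp
  have e: "nths (x#xs) A = (if 0 \<in> A then [x] else []) @ nths xs B" by (simp add: nths_Cons B_def)
  have xn: "x \<notin> set (nths xs B)" using Cons.prems set_nths_subset[of xs B] by auto
  have t: "filter (\<lambda>y. y \<in> set (nths (x#xs) A)) xs = filter (\<lambda>y. y \<in> set (nths xs B)) xs"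
    unfolding e using Cons.prems by (intro filter_cong) auto
  show ?case
    apply (subst (1) e)
    apply (subst filter.simps(2))
    apply (subst t)
    using IH xn e by auto
qed

lemma sortable_contains:
  assumes "sortable 2 p" "distinct p" "contains p s"
  shows "sortable 2 s"
proof -
  obtain A where iso: "order_iso (nths p A) s" using assms(3) unfolding contains_def by blast
  have "sortable 2 (filter (\<lambda>x. x \<in> set (nths p A)) p)" by (rule sortable_filter[OF assms(1)])
  then have "sortable 2 (nths p A)" using nths_filter[OF assms(2), of A] by simp
  then show ?thesis using sortable_iso iso assms(2) by simp
qed

lemma is_class_Sort2: "is_class (Sort 2)"
  unfolding is_class_def Sort_def using sortable_contains unfolding is_perm_def by blast

lemma sort_perm: assumes "is_perm p" shows "sort p = [1..<length p+1]"
proof (rule sorted_distinct_set_unique)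
  have "set [1..<length p+1] = {1..length p}" by (simp only: set_upt) auto
  then show "set (sort p) = set [1..<length p+1]" using assms unfolding is_perm_def by simp
  show "distinct (sort p)" using assms unfolding is_perm_def by simp
  show "sorted [1..<length p+1]" by (rule sorted_upt)
  show "distinct [1..<length p+1]" by (rule distinct_upt)
qed (rule sorted_sort)

lemma perm_iso_eq:
  assumes "is_perm p" "is_perm q" "order_iso p q"
  shows "p = q"
proof -
  have dp: "distinct p" using assms(1) unfolding is_perm_def by simp
  obtain f where f: "strict_mono_on (set p) f" "q = map f p" using order_iso_map[OF dp assms(3)] by blast
  have len: "length q = length p" using f by simp
  have s1: "sort q = map f (sort p)" unfolding f(2) by (rule sort_map_mono[OF f(1)])
  have "map f [1..<length p+1] = [1..<length p+1]"
    using s1 unfolding sort_perm[OF assms(1)] sort_perm[OF assms(2)] len by (rule sym)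
  then have "map f [1..<length p+1] = map id [1..<length p+1]" by simp
  then have fx: "\<forall>x\<in>set [1..<length p+1]. f x = x" unfolding map_eq_conv by simp
  have "set p = set [1..<length p+1]" using sort_perm[OF assms(1)] by (metis set_sort)
  then have "map f p = p" using fx by (intro map_idI) auto
  then show ?thesis using f by simp
qed


lemma omega_0[simp]: "omega 0 = []" by (simp add: omega_def)

lemma omega_Suc[simp]: "omega (Suc j) = (2*j+4) # (2*j+7) # omega j"
  by (simp add: omega_def)

primrec omg :: "nat \<Rightarrow> nat \<Rightarrow> nat list" where
  "omg 0 k = []"
| "omg (Suc i) k = (if k \<le> i then (2*i+4) # (2*i+7) # omg i k else [])"

lemma omg_split: "k \<le> i \<Longrightarrow> omega i = omg i k @ omega k"
  by (induction i) (auto simp: le_Suc_eq)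

lemma omg_self[simp]: "omg k k = []"
  by (cases k) auto

lemma set_omega: "x \<in> set (omega j) \<longleftrightarrow> (\<exists>m. 1 \<le> m \<and> m \<le> j \<and> (x = 2*m+2 \<or> x = 2*m+5))"
proof (induction j)
  case 0 then show ?case by auto
next
  case (Suc j)
  show ?case unfolding omega_Suc set_simps Suc.IH insert_iff
    by (auto simp: le_Suc_eq)
qed

lemma set_omg: "x \<in> set (omg i k) \<longleftrightarrow> (\<exists>m. k < m \<and> m \<le> i \<and> (x = 2*m+2 \<or> x = 2*m+5))"
proof (induction i)
  case 0 then show ?case by auto
next
  case (Suc i)
  show ?case
  proof (cases "k \<le> i")
    case True
    then show ?thesis unfolding omg.simps if_P[OF True] set_simps Suc.IH insert_iff
      by (auto simp: le_Suc_eq) presburger+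
  next
    case False
    then show ?thesis by auto
  qed
qed

lemma length_omega[simp]: "length (omega j) = 2*j"
  by (induction j) auto

lemma distinct_omega: "distinct (omega j)"
proof (induction j)
  case 0 then show ?case by simp
next
  case (Suc j)
  have "2*j+4 \<notin> set (omega j)" "2*j+7 \<notin> set (omega j)" unfolding set_omega by presburger+
  then show ?case using Suc by simp
qed

lemma length_alpha[simp]: "length (alpha j) = 2*j+5"
  by (simp add: alpha_def)

lemma set_alpha: "set (alpha j) = {1..2*j+5}"
proof -
  have "x \<in> set (alpha j) \<longleftrightarrow> x \<in> {1..2*j+5}" for x
    unfolding alpha_def set_append set_simps Un_iff insert_iff set_omega
    by auto presburger+
  then show ?thesis by blast
qed

lemma distinct_alpha: "distinct (alpha j)"
proof -
  have "\<forall>x\<in>set (omega j). x \<noteq> 2*j+4 \<and> x \<noteq> 3 \<and> x \<noteq> 1 \<and> x \<noteq> 5 \<and> x \<noteq> 2"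
    using set_omega[of _ j] by auto presburger+
  then show ?thesis unfolding alpha_def using distinct_omega by auto
qed

lemma perm_alpha: "is_perm (alpha j)"
  unfolding is_perm_def using distinct_alpha set_alpha by simp

lemma inj_alpha: "inj alpha"
  by (rule injI) (metis length_alpha add_right_cancel mult_left_cancel zero_neq_numeral)


fun dist2 :: "st2 \<Rightarrow> bool" where
  "dist2 (inp,a,b,I,out) = distinct (inp@a@b@I@out)"

lemma dist2_step: "step2 s s' \<Longrightarrow> dist2 s \<Longrightarrow> dist2 s'"
  by (induction rule: step2.induct) auto

lemma dist2_steps: "step2\<^sup>*\<^sup>* s s' \<Longrightarrow> dist2 s \<Longrightarrow> dist2 s'"
  by (induction rule: rtranclp_induct) (auto intro: dist2_step)

fun O1s :: "st2 \<Rightarrow> bool" where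
  "O1s (inp,a,b,I,out) = (out \<noteq> [1..<length out+1])"

fun bef :: "nat \<Rightarrow> nat \<Rightarrow> nat list \<Rightarrow> bool" where
  "bef x z [] = False"
| "bef x z (h#t) = ((h = x \<and> z \<in> set t) \<or> bef x z t)"

lemma bef_set: "bef x z inp \<Longrightarrow> z \<in> set inp"
  by (induction inp) auto

fun obs :: "nat \<Rightarrow> nat \<Rightarrow> nat \<Rightarrow> st2 \<Rightarrow> bool" where
  "obs y x z (inp,a,b,I,out) = (y \<in> set I \<and> 0<z \<and> z<y \<and> y<x \<and> x \<notin> set I \<and> x \<notin> set out \<and>
     z \<notin> set I \<and> z \<notin> set out \<and> z \<notin> set b \<and>
     ((x \<in> set b \<and> (z \<in> set inp \<or> z \<in> set a)) \<or> (x \<in> set a \<and> (z \<in> set a \<or> z \<in> set inp)) \<or>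
      bef x z inp))"

definition bad :: "st2 \<Rightarrow> bool" where
  "bad s = (O1s s \<or> (\<exists>y x z. obs y x z s))"

lemma O1_snoc: "out \<noteq> [1..<length out+1] \<Longrightarrow> out@[t] \<noteq> [1..<length (out@[t])+1]"
  by simp

lemma snoc_z: "out@[y] = [1..<length (out@[y])+1] \<Longrightarrow> 0<z \<Longrightarrow> z<y \<Longrightarrow> z \<in> set out"
proof -
  assume a: "out@[y] = [1..<length (out@[y])+1]" "0<z" "z<y"
  then have "out@[y] = [1..<length out+1] @ [length out + 1]" by simp
  then have e: "out = [1..<length out+1]" and y: "y = length out + 1" by simp_all
  have "set out = set [1..<length out+1]" using e by (rule arg_cong)
  then show ?thesis using a y by (simp; arith)
qed

lemma obs_step:
  assumes "step2 s s'" "wf2 s" "dist2 s" "obs y x z s"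
  shows "obs y x z s' \<or> O1s s'"
  using assms
proof (induction rule: step2.induct)
  case (p0 D1 h inp D2 I out)
  have "obs y x z (inp, h#D1, D2, I, out)"
    using p0.prems(3) unfolding obs.simps set_simps bef.simps by blast
  then show ?case by blast
next
  case (p1 D2 t inp D1 I out)
  have lt: "\<forall>w\<in>set D2. w < t" using p1 hd_gt_all[of D2 t] by simp
  have lt2: "\<forall>w\<in>set D1. w < t" using p1 by simp
  have dj: "t \<notin> set inp" using p1.prems(2) by simp
  have o: "obs y x z (inp, t#D1, D2, I, out)" using p1.prems(3) .
  have "obs y x z (inp, D1, t#D2, I, out)"
  proof -
    have zt: "z \<noteq> t"
      using o lt lt2 dj unfolding obs.simps set_simps by (auto dest: bef_set)
    show ?thesis using o zt lt lt2 unfolding obs.simps set_simps insert_iff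
      by (metis less_asym)
  qed
  then show ?case by blast
next
  case (p2 I t inp D1 D2 out)
  have lt: "\<forall>w\<in>set I. t < w" using p2 hd_lt_all[of I t] by simp
  have o: "obs y x z (inp, D1, t#D2, I, out)" using p2.prems(3) .
  have "obs y x z (inp, D1, D2, t#I, out)"
    using o lt unfolding obs.simps set_simps insert_iff by (metis less_asym)
  then show ?case by blast
next
  case (p3 inp D1 D2 t I out)
  show ?case
  proof (cases "t = y")
    case True
    then show ?thesis using p3 snoc_z[of out y z] by auto
  next
    case False
    then show ?thesis using p3 by auto
  qed
qed

lemma O1_step: "step2 s s' \<Longrightarrow> O1s s \<Longrightarrow> O1s s'"
  by (induction rule: step2.induct) auto

lemma bad_step:
  assumes "step2 s s'" "wf2 s" "dist2 s" "bad s"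
  shows "bad s'"
proof (cases "O1s s")
  case True
  then show ?thesis using O1_step[OF assms(1)] unfolding bad_def by blast
next
  case False
  then obtain y x z where "obs y x z s" using assms(4) unfolding bad_def by blast
  then show ?thesis using obs_step[OF assms(1-3)] unfolding bad_def by blast
qed


definition rest :: "nat \<Rightarrow> nat list" where "rest i = omega i @ [1,5,2]"

lemma rest_0: "rest 0 = [1,5,2]" by (simp add: rest_def)
lemma rest_Suc: "rest (Suc i) = (2*i+4) # (2*i+7) # rest i" by (simp add: rest_def)
lemma alpha_rest: "alpha j = (2*j+4) # 3 # rest j" by (simp add: alpha_def rest_def)

lemma two_in_rest: "2 \<in> set (rest i)" by (simp add: rest_def)

lemma rest_ne: "rest i \<noteq> []" by (simp add: rest_def)

lemma hd_rest: "rest i = h # t \<Longrightarrow> h \<le> 2*i+2"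
  by (cases i) (auto simp: rest_0 rest_Suc)

lemma bef_rest: "bef (2*i+5) 2 (rest i)"
  by (cases i) (auto simp: rest_0 rest_Suc two_in_rest)

lemma badI: "obs y x z s \<Longrightarrow> bad s" unfolding bad_def by blast
lemma badO: "O1s s \<Longrightarrow> bad s" unfolding bad_def by blast

lemma upt2: assumes "i < j" shows "[2*i+6..<2*j+6] = (2*i+6) # (2*i+7) # [2*i+8..<2*j+6]"
proof -
  have "[2*i+6..<2*j+6] = (2*i+6) # [Suc (2*i+6)..<2*j+6]" using assms by (simp add: upt_conv_Cons)
  also have "[Suc (2*i+6)..<2*j+6] = (2*i+7) # [Suc (2*i+7)..<2*j+6]" using assms by (simp add: upt_conv_Cons)
  finally show ?thesis by (simp add: numeral_eq_Suc)
qed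

lemma st_S0: assumes "step2 ((2*j+4)#3#rest j,[],[],[],[]) s'" shows "s' = (3#rest j,[2*j+4],[],[],[])"
  using assms by (cases rule: step2.cases) auto

lemma st_S1: assumes "step2 (3#rest j,[2*j+4],[],[],[]) s'" shows "s' = (3#rest j,[],[2*j+4],[],[])"
  using assms by (cases rule: step2.cases) auto

lemma obs_S2: "obs (2*j+4) (2*j+5) 2 (3#rest j,[],[],[2*j+4],[])"
  using bef_rest[of j] two_in_rest[of j] by auto

lemma st_S2: assumes "step2 (3#rest j,[],[2*j+4],[],[]) s'"
  shows "s' = (rest j,[3],[2*j+4],[],[]) \<or> bad s'"
  using assms by (cases rule: step2.cases) (auto intro: badI[OF obs_S2])

lemma obs_A0: "obs 4 5 2 ([1,5,2],[3],[],4#[6..<2*j+6],[])"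
  by auto

lemma st_A0: assumes "step2 ([1,5,2],[3],[4],[6..<2*j+6],[]) s'" shows "bad s'"
  using assms by (cases rule: step2.cases) (auto intro: badI[of 4 5 2] badO simp: upt_eq_Cons_conv)

lemma obs_A: "obs (2*i+6) (2*i+7) 2 ((2*i+4)#(2*i+7)#rest i,[3],[],(2*i+6)#[2*i+8..<2*j+6],[])"
  using two_in_rest[of i] by auto

lemma st_A: assumes "step2 ((2*i+4)#(2*i+7)#rest i,[3],[2*i+6],[2*i+8..<2*j+6],[]) s'"
  shows "s' = ((2*i+7)#rest i,[2*i+4,3],[2*i+6],[2*i+8..<2*j+6],[]) \<or> bad s'"
  using assms by (cases rule: step2.cases) (auto intro: badI[OF obs_A] badO simp: upt_eq_Cons_conv)

lemma obs_B1: "obs (2*i+6) (2*i+7) 2 ((2*i+7)#rest i,[2*i+4,3],[],(2*i+6)#[2*i+8..<2*j+6],[])"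
  using two_in_rest[of i] by auto

lemma st_B1: assumes "step2 ((2*i+7)#rest i,[2*i+4,3],[2*i+6],[2*i+8..<2*j+6],[]) s'"
  shows "s' = (rest i,[2*i+7,2*i+4,3],[2*i+6],[2*i+8..<2*j+6],[]) \<or> bad s'"
  using assms by (cases rule: step2.cases) (auto intro: badI[OF obs_B1] badO simp: upt_eq_Cons_conv)

lemma obs_B2: "obs (2*i+6) (2*i+7) 2 (rest i,[2*i+7,2*i+4,3],[],(2*i+6)#[2*i+8..<2*j+6],[])"
  using two_in_rest[of i] by auto

lemma st_B2: assumes "step2 (rest i,[2*i+7,2*i+4,3],[2*i+6],[2*i+8..<2*j+6],[]) s'"
  shows "s' = (rest i,[2*i+4,3],[2*i+7,2*i+6],[2*i+8..<2*j+6],[]) \<or> bad s'"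
  using assms by (cases rule: step2.cases) (auto intro: badI[OF obs_B2] badO dest: hd_rest simp: upt_eq_Cons_conv)

lemma st_B3: assumes "step2 (rest i,[2*i+4,3],[2*i+7,2*i+6],[2*i+8..<2*j+6],[]) s'"
  shows "s' = (rest i,[2*i+4,3],[2*i+6],(2*i+7)#[2*i+8..<2*j+6],[]) \<or> bad s'"
  using assms by (cases rule: step2.cases) (auto intro: badO dest: hd_rest simp: upt_eq_Cons_conv)

lemma st_B4: assumes "step2 (rest i,[2*i+4,3],[2*i+6],(2*i+7)#[2*i+8..<2*j+6],[]) s'"
  shows "s' = (rest i,[2*i+4,3],[],(2*i+6)#(2*i+7)#[2*i+8..<2*j+6],[]) \<or> bad s'"
  using assms by (cases rule: step2.cases) (auto intro: badO dest: hd_rest simp: upt_eq_Cons_conv)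

lemma st_B5: assumes "step2 (rest i,[2*i+4,3],[],(2*i+6)#(2*i+7)#[2*i+8..<2*j+6],[]) s'"
  shows "s' = (rest i,[3],[2*i+4],(2*i+6)#(2*i+7)#[2*i+8..<2*j+6],[]) \<or> bad s'"
  using assms by (cases rule: step2.cases) (auto intro: badO dest: hd_rest simp: upt_eq_Cons_conv)


definition Gi :: "nat \<Rightarrow> nat \<Rightarrow> st2 set" where
  "Gi j i = {((2*i+4)#(2*i+7)#rest i,[3],[2*i+6],[2*i+8..<2*j+6],[]),
        ((2*i+7)#rest i,[2*i+4,3],[2*i+6],[2*i+8..<2*j+6],[]),
        (rest i,[2*i+7,2*i+4,3],[2*i+6],[2*i+8..<2*j+6],[]),
        (rest i,[2*i+4,3],[2*i+7,2*i+6],[2*i+8..<2*j+6],[]),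
        (rest i,[2*i+4,3],[2*i+6],(2*i+7)#[2*i+8..<2*j+6],[]),
        (rest i,[2*i+4,3],[],(2*i+6)#(2*i+7)#[2*i+8..<2*j+6],[])}"

definition G :: "nat \<Rightarrow> st2 \<Rightarrow> bool" where
  "G j s \<longleftrightarrow> s \<in> {((2*j+4)#3#rest j,[],[],[],[]), (3#rest j,[2*j+4],[],[],[]),
     (3#rest j,[],[2*j+4],[],[]), ([1,5,2],[3],[4],[6..<2*j+6],[])} \<or> (\<exists>i<j. s \<in> Gi j i)"

lemma G_I: "i < j \<Longrightarrow> s \<in> Gi j i \<Longrightarrow> G j s"
  unfolding G_def by blast

lemma G_Aj: "G j (rest j,[3],[2*j+4],[],[])"
proof (cases j)
  case 0 then show ?thesis unfolding G_def by (simp add: rest_0)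
next
  case (Suc i)
  then have "(rest j,[3],[2*j+4],[],[]) = ((2*i+4)#(2*i+7)#rest i,[3],[2*i+6],[2*i+8..<2*j+6],[])"
    by (simp add: rest_Suc)
  then show ?thesis using Suc by (intro G_I[of i]) (auto simp: Gi_def)
qed

lemma G_Ai: assumes "i < j" shows "G j (rest i,[3],[2*i+4],(2*i+6)#(2*i+7)#[2*i+8..<2*j+6],[])"
proof (cases i)
  case 0 then show ?thesis unfolding G_def using upt2[OF assms] by (simp add: rest_0)
next
  case (Suc k)
  then have "(rest i,[3],[2*i+4],(2*i+6)#(2*i+7)#[2*i+8..<2*j+6],[]) =
     ((2*k+4)#(2*k+7)#rest k,[3],[2*k+6],[2*k+8..<2*j+6],[])"
    using upt2[OF assms] by (simp add: rest_Suc algebra_simps)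
  then show ?thesis using Suc assms by (intro G_I[of k]) (auto simp: Gi_def)
qed

lemma G_step: assumes st: "step2 s s'" and "G j s" shows "G j s' \<or> bad s'"
proof -
  from assms(2) have "s \<in> {((2*j+4)#3#rest j,[],[],[],[]), (3#rest j,[2*j+4],[],[],[]),
     (3#rest j,[],[2*j+4],[],[]), ([1,5,2],[3],[4],[6..<2*j+6],[])} \<or> (\<exists>i<j. s \<in> Gi j i)"
    unfolding G_def .
  then show ?thesis
  proof
    assume "s \<in> {((2*j+4)#3#rest j,[],[],[],[]), (3#rest j,[2*j+4],[],[],[]),
     (3#rest j,[],[2*j+4],[],[]), ([1,5,2],[3],[4],[6..<2*j+6],[])}"
    then consider (S0) "s = ((2*j+4)#3#rest j,[],[],[],[])" | (S1) "s = (3#rest j,[2*j+4],[],[],[])" |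
      (S2) "s = (3#rest j,[],[2*j+4],[],[])" | (A0) "s = ([1,5,2],[3],[4],[6..<2*j+6],[])" by blast
    then show ?thesis
    proof cases
      case S0 then show ?thesis using st st_S0[of j s'] unfolding G_def by simp
    next
      case S1 then show ?thesis using st st_S1[of j s'] unfolding G_def by simp
    next
      case S2 then show ?thesis using st st_S2[of j s'] G_Aj[of j] by auto
    next
      case A0 then show ?thesis using st st_A0[of j s'] by simp
    qed
  next
    assume "\<exists>i<j. s \<in> Gi j i"
    then obtain i where i: "i < j" "s \<in> Gi j i" by blast
    from i(2) consider
       (A) "s = ((2*i+4)#(2*i+7)#rest i,[3],[2*i+6],[2*i+8..<2*j+6],[])" |
       (B1) "s = ((2*i+7)#rest i,[2*i+4,3],[2*i+6],[2*i+8..<2*j+6],[])" |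
       (B2) "s = (rest i,[2*i+7,2*i+4,3],[2*i+6],[2*i+8..<2*j+6],[])" |
       (B3) "s = (rest i,[2*i+4,3],[2*i+7,2*i+6],[2*i+8..<2*j+6],[])" |
       (B4) "s = (rest i,[2*i+4,3],[2*i+6],(2*i+7)#[2*i+8..<2*j+6],[])" |
       (B5) "s = (rest i,[2*i+4,3],[],(2*i+6)#(2*i+7)#[2*i+8..<2*j+6],[])"
      unfolding Gi_def by blast
    then show ?thesis
    proof cases
      case A then show ?thesis using st st_A[of i j s'] G_I[OF i(1), of s'] unfolding Gi_def by auto
    next
      case B1 then show ?thesis using st st_B1[of i j s'] G_I[OF i(1), of s'] unfolding Gi_def by auto
    next
      case B2 then show ?thesis using st st_B2[of i j s'] G_I[OF i(1), of s'] unfolding Gi_def by auto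
    next
      case B3 then show ?thesis using st st_B3[of i j s'] G_I[OF i(1), of s'] unfolding Gi_def by auto
    next
      case B4 then show ?thesis using st st_B4[of i j s'] G_I[OF i(1), of s'] unfolding Gi_def by auto
    next
      case B5 then show ?thesis using st st_B5[of i j s'] G_Ai[OF i(1)] by auto
    qed
  qed
qed

lemma inv_reach: "step2\<^sup>*\<^sup>* s0 s \<Longrightarrow> s0 = (alpha j,[],[],[],[]) \<Longrightarrow> G j s \<or> bad s"
proof (induction rule: rtranclp_induct)
  case base then show ?case unfolding G_def alpha_rest by simp
next
  case (step y z)
  have w: "wf2 y" using wf2_steps[OF step(1)] step(4) by simp
  have d: "dist2 y" using dist2_steps[OF step(1)] step(4) distinct_alpha by simp
  show ?case using step G_step bad_step[OF step(2) w d] by blast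
qed

lemma not_sortable: "\<not> sortable 2 (alpha j)"
proof
  assume "sortable 2 (alpha j)"
  then have r: "step2\<^sup>*\<^sup>* (alpha j,[],[],[],[]) ([],[],[],[],sort (alpha j))" unfolding sortable2_iff .
  have so: "sort (alpha j) = [1..<length (sort (alpha j))+1]"
    using sort_perm[OF perm_alpha] by simp
  have "\<not> G j ([],[],[],[],sort (alpha j))" unfolding G_def Gi_def using rest_ne by auto
  moreover have "\<not> bad ([],[],[],[],sort (alpha j))" unfolding bad_def using so by auto
  ultimately show False using inv_reach[OF r] by blast
qed


definition op2 :: "nat \<Rightarrow> st2 \<Rightarrow> st2 option" where
  "op2 n s = (case s of (inp,a,b,I,out) \<Rightarrow>
     if n = 0 then (case inp of [] \<Rightarrow> None | x#r \<Rightarrow> if a = [] \<or> x > hd a then Some (r,x#a,b,I,out) else None)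
     else if n = 1 then (case a of [] \<Rightarrow> None | x#r \<Rightarrow> if b = [] \<or> x > hd b then Some (inp,r,x#b,I,out) else None)
     else if n = 2 then (case b of [] \<Rightarrow> None | x#r \<Rightarrow> if I = [] \<or> x < hd I then Some (inp,a,r,x#I,out) else None)
     else (case I of [] \<Rightarrow> None | x#r \<Rightarrow> Some (inp,a,b,r,out@[x])))"

fun run2 :: "nat list \<Rightarrow> st2 \<Rightarrow> st2 option" where
  "run2 [] s = Some s"
| "run2 (n#ns) s = (case op2 n s of None \<Rightarrow> None | Some t \<Rightarrow> run2 ns t)"

lemma op2_step: "op2 n s = Some t \<Longrightarrow> step2 s t"
  unfolding op2_def
  by (auto split: prod.splits list.splits if_splits intro: step2.intros)

lemma run2_steps: "run2 ns s = Some t \<Longrightarrow> step2\<^sup>*\<^sup>* s t"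
proof (induction ns arbitrary: s)
  case Nil then show ?case by simp
next
  case (Cons n ns)
  then obtain u where "op2 n s = Some u" "run2 ns u = Some t" by (auto split: option.splits)
  then show ?case using Cons.IH op2_step by (meson converse_rtranclp_into_rtranclp)
qed

lemma upt_snoc2: "k \<le> i \<Longrightarrow> [2*k+6..<2*i+6] @ (2*i+6) # (2*i+7) # L = [2*k+6..<2*Suc i+6] @ L"
proof -
  assume "k \<le> i"
  then have "[2*k+6..<2*Suc i+6] = [2*k+6..<2*i+6] @ [2*i+6, 2*i+7]"
    by (simp add: upt_add_eq_append[of "2*k+6" "2*i+6" 2] numeral_eq_Suc)
  then show ?thesis by simp
qed

lemma loop:
  assumes "k \<le> i" "L = [] \<or> 2*i+6 \<le> hd L" "bot1 = [] \<or> hd bot1 < 4" "bot2 = [] \<or> hd bot2 < 4"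
  shows "step2\<^sup>*\<^sup>* (omg i k @ tlx, bot1, (2*i+4)#bot2, L, out) (tlx, bot1, (2*k+4)#bot2, [2*k+6..<2*i+6] @ L, out)"
  using assms
proof (induction i arbitrary: L)
  case 0 then show ?case by simp
next
  case (Suc i)
  show ?case
  proof (cases "k \<le> i")
    case False
    then have "k = Suc i" using Suc.prems by simp
    then show ?thesis by simp
  next
    case True
    have c1: "bot1 = [] \<or> hd bot1 < 2*i+4" using Suc.prems by auto
    have c2: "bot2 = [] \<or> hd bot2 < 2*i+4" using Suc.prems by auto
    have c3: "L = [] \<or> 2*i+7 < hd L" using Suc.prems by auto
    have "run2 [0,0,1,2,2,1] ((2*i+4)#(2*i+7)#omg i k @ tlx, bot1, (2*i+6)#bot2, L, out) =
        Some (omg i k @ tlx, bot1, (2*i+4)#bot2, (2*i+6)#(2*i+7)#L, out)"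
      using c1 c2 c3 by (simp add: op2_def)
    from run2_steps[OF this] have r1: "step2\<^sup>*\<^sup>* ((2*i+4)#(2*i+7)#omg i k @ tlx, bot1, (2*i+6)#bot2, L, out)
        (omg i k @ tlx, bot1, (2*i+4)#bot2, (2*i+6)#(2*i+7)#L, out)" .
    have e: "omg (Suc i) k @ tlx = (2*i+4)#(2*i+7)#omg i k @ tlx" "2*Suc i+4 = 2*i+6" using True by simp_all
    have r2: "step2\<^sup>*\<^sup>* (omg i k @ tlx, bot1, (2*i+4)#bot2, (2*i+6)#(2*i+7)#L, out)
        (tlx, bot1, (2*k+4)#bot2, [2*k+6..<2*i+6] @ (2*i+6)#(2*i+7)#L, out)"
      using Suc.IH[of "(2*i+6)#(2*i+7)#L"] True Suc.prems by simp
    show ?thesis unfolding e using rtranclp_trans[OF r1 r2] upt_snoc2[OF True, of L] by simp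
  qed
qed


lemma omega_omg: "omega i = omg i 0"
  using omg_split[of 0 i] by simp

lemma hd_upt_gt: "c < a \<Longrightarrow> [a..<b] = [] \<or> c < hd [a..<b]"
  by (cases "a < b") (auto simp: hd_upt)

lemma E1: assumes "L = [] \<or> 5 < hd L"
  shows "step2\<^sup>*\<^sup>* ([5,2],[3],[4],L,out) ([],[],[],2#3#4#5#L,out)"
proof -
  have "run2 [0,1,2,2,1,2,0,1,2] ([5,2],[3],[4],L,out) = Some ([],[],[],2#3#4#5#L,out)"
    using assms by (simp add: op2_def)
  then show ?thesis by (rule run2_steps)
qed

lemma E2: assumes "L = [] \<or> 5 < hd L"
  shows "step2\<^sup>*\<^sup>* ([1,5],[3],[4],L,out) ([],[],[],5#L,out@[1,3,4])"
proof -
  have c: "L = [] \<or> 4 < hd L" using assms by auto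
  have "run2 [2,1,2,0,1,2,3,3,3,0,1,2] ([1,5],[3],[4],L,out) = Some ([],[],[],5#L,out@[1,3,4])"
    using assms c by (simp add: op2_def)
  then show ?thesis by (rule run2_steps)
qed

lemma E5: assumes "L = [] \<or> 5 < hd L"
  shows "step2\<^sup>*\<^sup>* ([1,2],[3],[4],L,out) ([],[],[],2#3#4#L,out@[1])"
proof -
  have c: "L = [] \<or> 4 < hd L" using assms by auto
  have "run2 [2,1,2,0,1,2,3,0,1,2] ([1,2],[3],[4],L,out) = Some ([],[],[],2#3#4#L,out@[1])"
    using c by (simp add: op2_def)
  then show ?thesis by (rule run2_steps)
qed

lemma E3: assumes "L = [] \<or> 5 < hd L"
  shows "step2\<^sup>*\<^sup>* ([1,5,2],[],[4],L,out) ([],[],[],2#4#5#L,out@[1])"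
proof -
  have "run2 [0,0,1,2,2,1,2,3,0,1,2] ([1,5,2],[],[4],L,out) = Some ([],[],[],2#4#5#L,out@[1])"
    using assms by (simp add: op2_def)
  then show ?thesis by (rule run2_steps)
qed

lemma E43: assumes "L = [] \<or> 5 < hd L"
  shows "step2\<^sup>*\<^sup>* ([1,5,2],[],[4,3],L,out) ([],[],[],2#3#4#5#L,out@[1])"
proof -
  have "run2 [0,0,1,2,2,2,1,2,3,0,1,2] ([1,5,2],[],[4,3],L,out) = Some ([],[],[],2#3#4#5#L,out@[1])"
    using assms by (simp add: op2_def)
  then show ?thesis by (rule run2_steps)
qed

lemma E3': assumes "L = [] \<or> 5 < hd L"
  shows "step2\<^sup>*\<^sup>* ([1,5,2],[],[3],L,out) ([],[],[],2#3#5#L,out@[1])"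
proof -
  have "run2 [0,0,1,2,2,1,2,3,0,1,2] ([1,5,2],[],[3],L,out) = Some ([],[],[],2#3#5#L,out@[1])"
    using assms by (simp add: op2_def)
  then show ?thesis by (rule run2_steps)
qed

lemma Centry: assumes "L = [] \<or> 2*i+7 < hd L"
  shows "step2\<^sup>*\<^sup>* ((2*i+4)#(2*i+7)#tlx,[],[3],L,out) (tlx,[],[2*i+4,3],(2*i+7)#L,out)"
proof -
  have "run2 [0,0,1,2,1] ((2*i+4)#(2*i+7)#tlx,[],[3],L,out) = Some (tlx,[],[2*i+4,3],(2*i+7)#L,out)"
    using assms by (simp add: op2_def)
  then show ?thesis by (rule run2_steps)
qed

lemma pre3: "step2\<^sup>*\<^sup>* ((2*j+4)#3#omega j@tlx,[],[],[],[]) (omg j 0@tlx,[3],[2*j+4],[],[])"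
proof -
  have "run2 [0,1,0] ((2*j+4)#3#omega j@tlx,[],[],[],[]) = Some (omega j@tlx,[3],[2*j+4],[],[])"
    by (simp add: op2_def)
  then show ?thesis unfolding omega_omg by (rule run2_steps)
qed

lemma main3: "step2\<^sup>*\<^sup>* ((2*j+4)#3#omega j@tlx,[],[],[],[]) (tlx,[3],[4],[6..<2*j+6],[])"
  using rtranclp_trans[OF pre3 loop[of 0 j "[]" "[3]" "[]" tlx "[]"]] by simp

lemma h6: "[6..<2*j+6] = [] \<or> 5 < hd [6..<2*j+6]" by (rule hd_upt_gt) simp

lemma sort_v1: "sortable 2 ((2*j+4)#3#omega j@[5,2])"
  by (rule run_sortable[OF rtranclp_trans[OF main3 E1[OF h6]]]) (auto simp: sorted_append)

lemma sort_v2: "sortable 2 ((2*j+4)#3#omega j@[1,5])"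
  by (rule run_sortable[OF rtranclp_trans[OF main3 E2[OF h6]]]) (auto simp: sorted_append)

lemma sort_v5: "sortable 2 ((2*j+4)#3#omega j@[1,2])"
  by (rule run_sortable[OF rtranclp_trans[OF main3 E5[OF h6]]]) (auto simp: sorted_append)

lemma sort_v3: "sortable 2 ((2*j+4)#omega j@[1,5,2])"
proof -
  have "run2 [0,1] ((2*j+4)#omega j@[1,5,2],[],[],[],[]) = Some (omega j@[1,5,2],[],[2*j+4],[],[])"
    by (simp add: op2_def)
  from run2_steps[OF this] have r: "step2\<^sup>*\<^sup>* ((2*j+4)#omega j@[1,5,2],[],[],[],[]) (omg j 0@[1,5,2],[],[2*j+4],[],[])"
    unfolding omega_omg .
  have r2: "step2\<^sup>*\<^sup>* (omg j 0@[1,5,2],[],[2*j+4],[],[]) ([1,5,2],[],[4],[6..<2*j+6],[])"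
    using loop[of 0 j "[]" "[]" "[]" "[1,5,2]" "[]"] by simp
  show ?thesis
    by (rule run_sortable[OF rtranclp_trans[OF rtranclp_trans[OF r r2] E3[OF h6]]]) (auto simp: sorted_append)
qed

lemma sort_vM: "sortable 2 (3#omega j@[1,5,2])"
proof -
  have "run2 [0,1] (3#omega j@[1,5,2],[],[],[],[]) = Some (omega j@[1,5,2],[],[3],[],[])"
    by (simp add: op2_def)
  from run2_steps[OF this] have r: "step2\<^sup>*\<^sup>* (3#omega j@[1,5,2],[],[],[],[]) (omega j@[1,5,2],[],[3],[],[])" .
  show ?thesis
  proof (cases j)
    case 0
    have r0: "step2\<^sup>*\<^sup>* (3#omega j@[1,5,2],[],[],[],[]) ([1,5,2],[],[3],[],[])" using r 0 by simp
    have e: "step2\<^sup>*\<^sup>* ([1,5,2],[],[3],[],[]) ([],[],[],[2,3,5],[1])" using E3'[of "[]" "[]"] by simp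
    show ?thesis by (rule run_sortable[OF rtranclp_trans[OF r0 e]]) simp
  next
    case (Suc i)
    have r2: "step2\<^sup>*\<^sup>* (omega j@[1,5,2],[],[3],[],[]) (omg i 0@[1,5,2],[],[2*i+4,3],[2*i+7],[])"
      using Centry[of "[]" i "omega i@[1,5,2]" "[]"] Suc by (simp add: omega_omg)
    have r3: "step2\<^sup>*\<^sup>* (omg i 0@[1,5,2],[],[2*i+4,3],[2*i+7],[]) ([1,5,2],[],[4,3],[6..<2*i+6]@[2*i+7],[])"
      using loop[of 0 i "[2*i+7]" "[]" "[3]" "[1,5,2]" "[]"] by simp
    have h: "[6..<2*i+6]@[2*i+7] = [] \<or> 5 < hd ([6..<2*i+6]@[2*i+7])"
      by (cases i) (auto simp: hd_append hd_upt)
    show ?thesis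
      by (rule run_sortable[OF rtranclp_trans[OF rtranclp_trans[OF rtranclp_trans[OF r r2] r3] E43[OF h]]])
         (auto simp: sorted_append)
  qed
qed

lemma pre_k: assumes "k \<le> j"
  shows "step2\<^sup>*\<^sup>* ((2*j+4)#3#omg j k@X,[],[],[],[]) (X,[3],[2*k+4],[2*k+6..<2*j+6],[])"
proof -
  have "run2 [0,1,0] ((2*j+4)#3#omg j k@X,[],[],[],[]) = Some (omg j k@X,[3],[2*j+4],[],[])"
    by (simp add: op2_def)
  from run2_steps[OF this] show ?thesis
    using loop[OF assms, of "[]" "[3]" "[]" X "[]"] by simp
qed

lemma sort_odd: assumes "k < j"
  shows "sortable 2 ((2*j+4)#3#omg j (Suc k) @ (2*k+4)#omega k @ [1,5,2])"
proof -
  have ek: "2*Suc k+4 = 2*k+6" "2*Suc k+6 = 2*k+8" by simp_all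
  have r1: "step2\<^sup>*\<^sup>* ((2*j+4)#3#omg j (Suc k) @ (2*k+4)#omega k @ [1,5,2],[],[],[],[])
      ((2*k+4)#omega k @ [1,5,2],[3],[2*k+6],[2*k+8..<2*j+6],[])"
    using pre_k[of "Suc k" j, unfolded ek] assms by (metis Suc_leI)
  have c: "[2*k+8..<2*j+6] = [] \<or> 2*k+6 < hd [2*k+8..<2*j+6]" by (rule hd_upt_gt) simp
  have "run2 [2,1,0,1] ((2*k+4)#omega k @ [1,5,2],[3],[2*k+6],[2*k+8..<2*j+6],[]) =
     Some (omega k @ [1,5,2],[],[2*k+4,3],(2*k+6)#[2*k+8..<2*j+6],[])"
    using c by (simp add: op2_def)
  from run2_steps[OF this] have r2: "step2\<^sup>*\<^sup>* ((2*k+4)#omega k @ [1,5,2],[3],[2*k+6],[2*k+8..<2*j+6],[])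
     (omg k 0 @ [1,5,2],[],[2*k+4,3],(2*k+6)#[2*k+8..<2*j+6],[])" unfolding omega_omg .
  have r3: "step2\<^sup>*\<^sup>* (omg k 0 @ [1,5,2],[],[2*k+4,3],(2*k+6)#[2*k+8..<2*j+6],[])
     ([1,5,2],[],[4,3],[6..<2*k+6]@(2*k+6)#[2*k+8..<2*j+6],[])"
    using loop[of 0 k "(2*k+6)#[2*k+8..<2*j+6]" "[]" "[3]" "[1,5,2]" "[]"] by simp
  have h: "[6..<2*k+6]@(2*k+6)#[2*k+8..<2*j+6] = [] \<or> 5 < hd ([6..<2*k+6]@(2*k+6)#[2*k+8..<2*j+6])"
    by (cases k) (auto simp: hd_append hd_upt)
  show ?thesis
    by (rule run_sortable[OF rtranclp_trans[OF rtranclp_trans[OF rtranclp_trans[OF r1 r2] r3] E43[OF h]]])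
       (auto simp: sorted_append)
qed

lemma sort_even: assumes "k < j"
  shows "sortable 2 ((2*j+4)#3#omg j (Suc k) @ (2*k+7)#omega k @ [1,5,2])"
proof -
  have ek: "2*Suc k+4 = 2*k+6" "2*Suc k+6 = 2*k+8" by simp_all
  have r1: "step2\<^sup>*\<^sup>* ((2*j+4)#3#omg j (Suc k) @ (2*k+7)#omega k @ [1,5,2],[],[],[],[])
      ((2*k+7)#omega k @ [1,5,2],[3],[2*k+6],[2*k+8..<2*j+6],[])"
    using pre_k[of "Suc k" j, unfolded ek] assms by (metis Suc_leI)
  have c: "[2*k+8..<2*j+6] = [] \<or> 2*k+7 < hd [2*k+8..<2*j+6]" by (rule hd_upt_gt) simp
  have "run2 [0,1,2,2,1] ((2*k+7)#omega k @ [1,5,2],[3],[2*k+6],[2*k+8..<2*j+6],[]) =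
     Some (omega k @ [1,5,2],[],[3],(2*k+6)#(2*k+7)#[2*k+8..<2*j+6],[])"
    using c by (simp add: op2_def)
  from run2_steps[OF this] have r2: "step2\<^sup>*\<^sup>* ((2*k+7)#omega k @ [1,5,2],[3],[2*k+6],[2*k+8..<2*j+6],[])
     (omega k @ [1,5,2],[],[3],(2*k+6)#(2*k+7)#[2*k+8..<2*j+6],[])" .
  show ?thesis
  proof (cases k)
    case 0
    have e: "step2\<^sup>*\<^sup>* ([1,5,2],[],[3],6#7#[8..<2*j+6],[]) ([],[],[],2#3#5#6#7#[8..<2*j+6],[1])"
      using E3'[of "6#7#[8..<2*j+6]" "[]"] by simp
    have r12: "step2\<^sup>*\<^sup>* ((2*j+4)#3#omg j (Suc 0) @ (2*0+7)#omega 0 @ [1,5,2],[],[],[],[])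
       ([1,5,2],[],[3],6#7#[8..<2*j+6],[])" using rtranclp_trans[OF r1 r2] 0 by simp
    show ?thesis unfolding 0
      by (rule run_sortable[OF rtranclp_trans[OF r12 e]]) (auto simp: sorted_append)
  next
    case (Suc m)
    have r3: "step2\<^sup>*\<^sup>* (omega k @ [1,5,2],[],[3],(2*k+6)#(2*k+7)#[2*k+8..<2*j+6],[])
       (omg m 0 @ [1,5,2],[],[2*m+4,3],(2*m+7)#(2*k+6)#(2*k+7)#[2*k+8..<2*j+6],[])"
      using Centry[of "(2*k+6)#(2*k+7)#[2*k+8..<2*j+6]" m "omega m @ [1,5,2]" "[]"] Suc
      by (simp add: omega_omg)
    have r4: "step2\<^sup>*\<^sup>* (omg m 0 @ [1,5,2],[],[2*m+4,3],(2*m+7)#(2*k+6)#(2*k+7)#[2*k+8..<2*j+6],[])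
       ([1,5,2],[],[4,3],[6..<2*m+6]@(2*m+7)#(2*k+6)#(2*k+7)#[2*k+8..<2*j+6],[])"
      using loop[of 0 m "(2*m+7)#(2*k+6)#(2*k+7)#[2*k+8..<2*j+6]" "[]" "[3]" "[1,5,2]" "[]"] by simp
    have h: "[6..<2*m+6]@(2*m+7)#(2*k+6)#(2*k+7)#[2*k+8..<2*j+6] = [] \<or>
       5 < hd ([6..<2*m+6]@(2*m+7)#(2*k+6)#(2*k+7)#[2*k+8..<2*j+6])"
      by (cases m) (auto simp: hd_append hd_upt)
    show ?thesis
      by (rule run_sortable[OF rtranclp_trans[OF rtranclp_trans[OF rtranclp_trans[OF rtranclp_trans[OF r1 r2] r3] r4] E43[OF h]]])
         (auto simp: sorted_append Suc)
  qed
qed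


lemma alpha_eq: "alpha j = (2*j+4)#3#omega j @ [1,5,2]" by (simp add: alpha_def)

lemma small_nin: "x < 4 \<or> x = 5 \<Longrightarrow> x \<notin> set (omega j)"
  unfolding set_omega by (auto; presburger)

lemma M_nin: "2*j+4 \<notin> set (omega j)"
  unfolding set_omega by presburger

lemma sortable_del:
  assumes "v \<in> set (alpha j)"
  shows "sortable 2 (removeAll v (alpha j))"
proof -
  have "1 \<le> v \<and> v \<le> 2*j+5" using assms set_alpha by simp
  then have "v = 1 \<or> v = 2 \<or> v = 3 \<or> v = 5 \<or> v = 2*j+4 \<or> (\<exists>k<j. v = 2*k+7) \<or> (\<exists>k<j. v = 2*k+4)"
    by presburger
  then consider "v = 1" | "v = 2" | "v = 3" | "v = 5" | "v = 2*j+4" | k where "k<j" "v = 2*k+7" |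
     k where "k<j" "v = 2*k+4" by blast
  then show ?thesis
  proof cases
    case 1
    then have "removeAll v (alpha j) = (2*j+4)#3#omega j @ [5,2]"
      using small_nin[of v j] by (simp add: alpha_eq)
    then show ?thesis using sort_v1 by simp
  next
    case 2
    then have "removeAll v (alpha j) = (2*j+4)#3#omega j @ [1,5]"
      using small_nin[of v j] by (simp add: alpha_eq)
    then show ?thesis using sort_v2 by simp
  next
    case 3
    then have "removeAll v (alpha j) = (2*j+4)#omega j @ [1,5,2]"
      using small_nin[of v j] by (simp add: alpha_eq)
    then show ?thesis using sort_v3 by simp
  next
    case 4
    then have "removeAll v (alpha j) = (2*j+4)#3#omega j @ [1,2]"
      using small_nin[of v j] by (simp add: alpha_eq)
    then show ?thesis using sort_v5 by simp
  next
    case 5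
    then have "removeAll v (alpha j) = 3#omega j @ [1,5,2]"
      using M_nin[of j] by (simp add: alpha_eq)
    then show ?thesis using sort_vM by simp
  next
    case (6 k)
    have om: "omega j = omg j (Suc k) @ (2*k+4)#(2*k+7)#omega k"
      using omg_split[of "Suc k" j] 6 by simp
    have "\<not>(\<exists>m>Suc k. m \<le> j \<and> (v = 2*m+2 \<or> v = 2*m+5))" using 6 by presburger
    then have n1: "v \<notin> set (omg j (Suc k))" using set_omg[of v j "Suc k"] by blast
    have "\<not>(\<exists>m\<ge>1. m \<le> k \<and> (v = 2*m+2 \<or> v = 2*m+5))" using 6 by presburger
    then have n2: "v \<notin> set (omega k)" using set_omega[of v k] by blast
    have "removeAll v (alpha j) = (2*j+4)#3#omg j (Suc k) @ (2*k+4)#omega k @ [1,5,2]"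
      using n1 n2 6 unfolding alpha_eq om by simp presburger
    then show ?thesis using sort_odd[OF 6(1)] by simp
  next
    case (7 k)
    have om: "omega j = omg j (Suc k) @ (2*k+4)#(2*k+7)#omega k"
      using omg_split[of "Suc k" j] 7 by simp
    have "\<not>(\<exists>m>Suc k. m \<le> j \<and> (v = 2*m+2 \<or> v = 2*m+5))" using 7 by presburger
    then have n1: "v \<notin> set (omg j (Suc k))" using set_omg[of v j "Suc k"] by blast
    have "\<not>(\<exists>m\<ge>1. m \<le> k \<and> (v = 2*m+2 \<or> v = 2*m+5))" using 7 by presburger
    then have n2: "v \<notin> set (omega k)" using set_omega[of v k] by blast
    have "removeAll v (alpha j) = (2*j+4)#3#omg j (Suc k) @ (2*k+7)#omega k @ [1,5,2]"
      using n1 n2 7 unfolding alpha_eq om by simp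
    then show ?thesis using sort_even[OF 7(1)] by simp
  qed
qed

lemma filter_removeAll: "v \<notin> S \<Longrightarrow> filter (\<lambda>x. x \<in> S) xs = filter (\<lambda>x. x \<in> S) (removeAll v xs)"
  by (induction xs) auto

lemma alpha_basis: "alpha j \<in> basis (Sort 2)"
  unfolding basis_def
proof (intro CollectI conjI allI impI)
  show "is_perm (alpha j)" by (rule perm_alpha)
  show "alpha j \<notin> Sort 2" using not_sortable unfolding Sort_def by blast
  fix t assume t: "is_perm t \<and> contains (alpha j) t \<and> t \<noteq> alpha j"
  then obtain A where iso: "order_iso (nths (alpha j) A) t" unfolding contains_def by blast
  define S where "S = set (nths (alpha j) A)"
  have nf: "nths (alpha j) A = filter (\<lambda>x. x \<in> S) (alpha j)"
    unfolding S_def by (rule nths_filter[OF distinct_alpha])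
  show "t \<in> Sort 2"
  proof (cases "set (alpha j) \<subseteq> S")
    case True
    then have "nths (alpha j) A = alpha j" unfolding nf by (simp add: subset_iff)
    then have "order_iso (alpha j) t" using iso by simp
    then have "alpha j = t" using perm_iso_eq[OF perm_alpha[of j]] t by blast
    then have "t = alpha j" by simp
    then show ?thesis using t by simp
  next
    case False
    then obtain v where v: "v \<in> set (alpha j)" "v \<notin> S" by blast
    have e: "filter (\<lambda>x. x \<in> S) (alpha j) = filter (\<lambda>x. x \<in> S) (removeAll v (alpha j))"
      using v(2) by (rule filter_removeAll)
    have s1: "sortable 2 (filter (\<lambda>x. x \<in> S) (removeAll v (alpha j)))"
      by (rule sortable_filter[OF sortable_del[OF v(1)]])
    have d: "distinct (filter (\<lambda>x. x \<in> S) (removeAll v (alpha j)))"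
      using distinct_alpha[of j] by (simp add: removeAll_filter_not_eq)
    have "sortable 2 t" using sortable_iso[OF s1 d] iso nf e by simp
    then show ?thesis using t unfolding Sort_def by simp
  qed
qed

theorem mainTheorem4:
  shows "is_class (Sort 2) \<and> infinite (basis (Sort 2)) \<and> (\<forall>j. alpha j \<in> basis (Sort 2))"
proof (intro conjI allI)
  show "is_class (Sort 2)" by (rule is_class_Sort2)
  show "alpha j \<in> basis (Sort 2)" for j by (rule alpha_basis)
  show "infinite (basis (Sort 2))"
  proof
    assume "finite (basis (Sort 2))"
    moreover have "range alpha \<subseteq> basis (Sort 2)" using alpha_basis by blast
    ultimately have "finite (UNIV :: nat set)" using inj_on_finite[OF inj_alpha] by blast
    then show False by simp
  qed
qed

end
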